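(* For any cardinal $\kappa\ge\omega$ and integer $d\ge2$, $w\chi_{\rm CF}(\kappa,\kappa,d)=\left\lfloor d/2\right\rfloor+1$.
   Context: A weak conflict free coloring of a family $\mathcal A$ with $\rho$ colors is a function $f$ with $\operatorname{dom}(f)\subseteq\bigcup\mathcal A$, values in $\rho$, such that every $A\in\mathcal A$ has some $\zeta<\rho$ with $|A\cap f^{-1}\{\zeta\}|=1$; $w\chi_{\rm CF}(\mathcal A)$ is the least such $\rho$. A $(\lambda,\kappa,\mu)$-system is a family of $\lambda$ sets each of size $\kappa$, distinct members meeting in fewer than $\mu$ points; $w\chi_{\rm CF}(\lambda,\kappa,\mu)$ is the supremum of $w\chi_{\rm CF}(\mathcal A)$ over all $(\lambda,\kappa,\mu)$-systems. *)

theory Defs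
  imports "HOL-Library.Extended_Nat"
begin

unbundle cardinal_syntax

definition wCF_coloring :: "'a set set \<Rightarrow> nat \<Rightarrow> ('a \<rightharpoonup> nat) \<Rightarrow> bool" where
  "wCF_coloring \<A> \<rho> f \<longleftrightarrow>
     dom f \<subseteq> \<Union>\<A> \<and> ran f \<subseteq> {..<\<rho>} \<and>
     (\<forall>A\<in>\<A>. \<exists>\<zeta><\<rho>. card (A \<inter> {x. f x = Some \<zeta>}) = 1)"

definition wCF_colorable :: "'a set set \<Rightarrow> nat \<Rightarrow> bool" where
  "wCF_colorable \<A> \<rho> \<longleftrightarrow> (\<exists>f. wCF_coloring \<A> \<rho> f)"

text \<open>The weak conflict free chromatic number; all infinite values are collapsed to \<infinity>.\<close>
definition wchi_CF :: "'a set set \<Rightarrow> enat" where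
  "wchi_CF \<A> = (if \<exists>n. wCF_colorable \<A> n then enat (LEAST n. wCF_colorable \<A> n) else \<infinity>)"

definition lkm_system :: "'a set set \<Rightarrow> 'l rel \<Rightarrow> 'k rel \<Rightarrow> nat \<Rightarrow> bool" where
  "lkm_system \<A> lam \<kappa> \<mu> \<longleftrightarrow>
     |\<A>| =o lam \<and> (\<forall>A\<in>\<A>. |A| =o \<kappa>) \<and>
     (\<forall>A\<in>\<A>. \<forall>B\<in>\<A>. A \<noteq> B \<longrightarrow> finite (A \<inter> B) \<and> card (A \<inter> B) < \<mu>)"

definition wchi_CF_sys :: "'a itself \<Rightarrow> 'l rel \<Rightarrow> 'k rel \<Rightarrow> nat \<Rightarrow> enat" where
  "wchi_CF_sys _ lam \<kappa> \<mu> = (SUP \<A> \<in> {\<A> :: 'a set set. lkm_system \<A> lam \<kappa> \<mu>}. wchi_CF \<A>)"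

end

theory Submission
  imports Defs
begin


lemma fin_less: "finite X \<Longrightarrow> infinite K \<Longrightarrow> |X| <o |K|"
  by (rule finite_ordLess_infinite) (auto simp: card_of_well_order_on Field_card_of)

lemma union_small:
  assumes K: "infinite K" and I: "|I| <o |K|" and F: "\<forall>i\<in>I. finite (X i)"
  shows "|\<Union>i\<in>I. X i| <o |K|"
proof (cases "finite I")
  case True
  then show ?thesis using F K by (intro fin_less) auto
next
  case False
  have "|\<Union>i\<in>I. X i| \<le>o |I|"
    using False F by (intro card_of_UNION_ordLeq_infinite)
      (auto intro: ordLess_imp_ordLeq fin_less ordLeq_reflexive card_of_Well_order)
  then show ?thesis using I ordLeq_ordLess_trans by blast
qed

definition dsub :: "'b set \<Rightarrow> nat \<Rightarrow> 'b set set" where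
  "dsub S n = {F. F \<subseteq> S \<and> finite F \<and> card F = n}"

lemma dsub_leq:
  assumes S: "infinite S" shows "|dsub S n| \<le>o |S|"
proof (induction n)
  case 0
  have "dsub S 0 = {{}}" unfolding dsub_def by auto
  moreover have "S \<noteq> {}" using S by auto
  ultimately show ?case by (simp add: card_of_singl_ordLeq)
next
  case (Suc n)
  have sub: "dsub S (Suc n) \<subseteq> (\<lambda>(x,G). insert x G) ` (S \<times> dsub S n)"
  proof
    fix F assume "F \<in> dsub S (Suc n)"
    then have F: "F \<subseteq> S" "finite F" "card F = Suc n" unfolding dsub_def by auto
    then obtain x where x: "x \<in> F" by (metis card.empty card_eq_0_iff nat.distinct(1) ex_in_conv)
    have "F - {x} \<in> dsub S n" using F x unfolding dsub_def by auto
    moreover have "F = insert x (F - {x})" using x by auto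
    ultimately show "F \<in> (\<lambda>(x,G). insert x G) ` (S \<times> dsub S n)"
      using x F by (auto intro!: image_eqI[where x="(x, F - {x})"])
  qed
  have "|S \<times> dsub S n| \<le>o |S|"
    using S Suc by (intro card_of_Times_ordLeq_infinite_Field)
      (auto simp: Field_card_of card_of_Card_order card_of_card_order_on intro: ordLeq_reflexive card_of_Well_order)
  then show ?case using surj_imp_ordLeq[OF sub] ordLeq_transitive by blast
qed

lemma dsub_less:
  assumes K: "infinite K" and S: "|S| <o |K|" shows "|dsub S n| <o |K|"
proof (cases "finite S")
  case True
  have "dsub S n \<subseteq> Pow S" unfolding dsub_def by auto
  then have "finite (dsub S n)" using True finite_subset by blast
  then show ?thesis using K fin_less by blast
next
  case False
  then show ?thesis using dsub_leq S ordLeq_ordLess_trans by blast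
qed

lemma not_covered:
  assumes K: "infinite K" and A: "|A| =o |K|" and R: "|R| <o |K|"
  shows "\<exists>x\<in>A. x \<notin> R"
proof (rule ccontr)
  assume "\<not> ?thesis" then have "A \<subseteq> R" by auto
  then have "|A| \<le>o |R|" by (rule card_of_mono1)
  then have "|A| <o |K|" using R ordLeq_ordLess_trans by blast
  then show False using A not_ordLess_ordIso by blast
qed

lemma lin_max:
  assumes L: "Linear_order r" and G: "finite G" "G \<noteq> {}" "G \<subseteq> Field r"
  shows "\<exists>m\<in>G. \<forall>a\<in>G. (a,m) \<in> r"
  using G
proof (induction G rule: finite_ne_induct)
  case (singleton x)
  then show ?case using L by (auto simp: linear_order_on_def partial_order_on_def preorder_on_def refl_on_def)
next
  case (insert x G)
  then obtain m where m: "m \<in> G" "\<forall>a\<in>G. (a,m) \<in> r" by auto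
  have xF: "x \<in> Field r" and mF: "m \<in> Field r" using insert m by auto
  have tr: "trans r" and tot: "total_on (Field r) r" and rf: "refl_on (Field r) r"
    using L by (auto simp: linear_order_on_def partial_order_on_def preorder_on_def)
  show ?case
  proof (cases "(x,m) \<in> r")
    case True then show ?thesis using m xF rf by (auto simp: refl_on_def)
  next
    case False
    then have "(m,x) \<in> r" using tot xF mF by (metis total_on_def rf refl_on_def)
    then show ?thesis using m tr xF rf by (auto simp: refl_on_def dest: transD)
  qed
qed



lemma two_le_card_sum:
  assumes "finite E" "\<forall>i\<le>k. 2 \<le> card {B\<in>E. c B = (i::nat)}"
  shows "2 * (k+1) \<le> card {B\<in>E. c B \<le> k}"
  using assms(2)
proof (induction k)
  case 0
  then show ?case by auto
next
  case (Suc k)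
  have eq: "{B\<in>E. c B \<le> Suc k} = {B\<in>E. c B \<le> k} \<union> {B\<in>E. c B = Suc k}" by auto
  have "card {B\<in>E. c B \<le> Suc k} = card {B\<in>E. c B \<le> k} + card {B\<in>E. c B = Suc k}"
    unfolding eq using assms(1) by (intro card_Un_disjoint) auto
  moreover have "2 * (k+1) \<le> card {B\<in>E. c B \<le> k}" using Suc by auto
  moreover have "2 \<le> card {B\<in>E. c B = Suc k}" using Suc.prems by auto
  ultimately show ?case by simp
qed

lemma upper:
  fixes \<A> :: "'a set set" and K :: "'k set" and d k :: nat
  assumes K: "infinite K" and cA: "|\<A>| =o |K|" and cB: "\<forall>A\<in>\<A>. |A| =o |K|"
    and inter: "\<forall>A\<in>\<A>. \<forall>B\<in>\<A>. A \<noteq> B \<longrightarrow> finite (A \<inter> B) \<and> card (A \<inter> B) < d"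
    and dk: "d \<le> 2*k+1" and k1: "1 \<le> k"
  shows "wCF_colorable \<A> (Suc k)"
proof -
  define W where "W = |\<A>|"
  define R where "R = W - Id"
  have WO: "Well_order W" "Field W = \<A>" "Card_order W"
    by (auto simp: W_def card_of_well_order_on card_of_card_order_on Field_card_of)
  have wfR: "wf R" using WO by (simp add: R_def well_order_on_def)
  have lin: "Linear_order W" using WO by (simp add: well_order_on_def)
  have pre_small: "|{B. (B,A)\<in>R}| <o |K|" if "A \<in> \<A>" for A
  proof -
    have "{B. (B,A)\<in>R} = underS W A" by (auto simp: R_def underS_def)
    moreover have "|underS W A| <o W" using card_of_underS[OF WO(3)] that WO(2) by auto
    ultimately show ?thesis using cA ordLess_ordIso_trans unfolding W_def by metis
  qed
  have R_in: "B \<in> \<A> \<and> A \<in> \<A> \<and> B \<noteq> A" if "(B,A) \<in> R" for A B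
    using that WO(2) by (auto simp: R_def dest: FieldI1 FieldI2)
  have R_total: "(A,B)\<in>R \<or> (B,A)\<in>R" if "A\<in>\<A>" "B\<in>\<A>" "A\<noteq>B" for A B
    using lin that WO(2) by (auto simp: R_def linear_order_on_def total_on_def)
  have R_asym: "(B,A)\<notin>R" if "(A,B)\<in>R" for A B
    using lin that by (auto simp: R_def linear_order_on_def partial_order_on_def antisym_def)
  have W_R: "(A,B) \<in> W \<Longrightarrow> A \<noteq> B \<Longrightarrow> (A,B) \<in> R" for A B by (auto simp: R_def)
  define H where "H = (\<lambda>(f::'a set \<Rightarrow> 'a \<times> nat) A.
     let S = (\<lambda>B. fst (f B)) ` {B. (B,A)\<in>R};
         bad = {B\<in>\<A>. B \<noteq> A \<and> (\<exists>F. F \<subseteq> B \<inter> S \<and> finite F \<and> card F = d)};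
         y = (SOME y. y \<in> A \<and> (\<forall>B. (B,A)\<in>R \<longrightarrow> y\<notin>B) \<and> (\<forall>B\<in>bad. y\<notin>B));
         cnt = (\<lambda>i. card {B. (B,A)\<in>R \<and> fst (f B) \<in> A \<and> snd (f B) = i});
         cc = (SOME cc. cc \<le> k \<and> (cnt cc = 0 \<or> (\<exists>i\<le>k. i\<noteq>cc \<and> cnt i = 1)))
     in (y, cc))"
  define g where "g = wfrec R H"
  define x where "x = (\<lambda>A. fst (g A))"
  define c where "c = (\<lambda>A. snd (g A))"
  have gA: "g A = H (cut g R A) A" for A by (simp add: g_def wfrec[OF wfR])
  have LS: "(\<lambda>B. fst (cut g R A B)) ` {B. (B,A)\<in>R} = x ` {B. (B,A)\<in>R}" for A
    by (auto simp: cut_def x_def image_iff)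
  have LE: "{B. (B,A)\<in>R \<and> fst (cut g R A B) \<in> A \<and> snd (cut g R A B) = i}
      = {B. (B,A)\<in>R \<and> x B \<in> A \<and> c B = i}" for A i
    by (auto simp: cut_def x_def c_def)
  define bad where "bad = (\<lambda>A. {B\<in>\<A>. B \<noteq> A \<and> (\<exists>F. F \<subseteq> B \<inter> x ` {B. (B,A)\<in>R} \<and> finite F \<and> card F = d)})"
  define Px where "Px = (\<lambda>A y. y \<in> A \<and> (\<forall>B. (B,A)\<in>R \<longrightarrow> y\<notin>B) \<and> (\<forall>B\<in>bad A. y\<notin>B))"
  define cnt where "cnt = (\<lambda>A i. card {B. (B,A)\<in>R \<and> x B \<in> A \<and> c B = i})"
  have x_eq: "x A = (SOME y. Px A y)" for A
    unfolding x_def gA[of A] unfolding H_def Let_def LS LE Px_def bad_def by simp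
  have c_eq: "c A = (SOME cc. cc \<le> k \<and> (cnt A cc = 0 \<or> (\<exists>i\<le>k. i\<noteq>cc \<and> cnt A i = 1)))" for A
    unfolding c_def gA[of A] unfolding H_def Let_def LS LE cnt_def by simp
  have Px_ex: "\<exists>y. Px A y" if A: "A \<in> \<A>" for A
  proof -
    let ?P = "{B. (B,A)\<in>R}"
    let ?S = "x ` ?P"
    have Pz: "|?P| <o |K|" using pre_small A .
    have Sz: "|?S| <o |K|" using card_of_image Pz ordLeq_ordLess_trans by blast
    define \<phi> where "\<phi> = (\<lambda>B. SOME F. F \<subseteq> B \<inter> ?S \<and> finite F \<and> card F = d)"
    have \<phi>: "\<phi> B \<subseteq> B \<inter> ?S \<and> finite (\<phi> B) \<and> card (\<phi> B) = d" if "B \<in> bad A" for B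
    proof -
      have "\<exists>F. F \<subseteq> B \<inter> ?S \<and> finite F \<and> card F = d" using that unfolding bad_def by blast
      then show ?thesis unfolding \<phi>_def by (rule someI_ex)
    qed
    have "inj_on \<phi> (bad A)"
    proof (rule inj_onI)
      fix B B' assume B: "B \<in> bad A" and B': "B' \<in> bad A" and eq: "\<phi> B = \<phi> B'"
      show "B = B'"
      proof (rule ccontr)
        assume ne: "B \<noteq> B'"
        have "B \<in> \<A>" "B' \<in> \<A>" using B B' by (auto simp: bad_def)
        then have "finite (B \<inter> B')" "card (B \<inter> B') < d" using inter ne by auto
        moreover have "\<phi> B \<subseteq> B \<inter> B'" using \<phi>[OF B] \<phi>[OF B'] eq by auto
        ultimately have "card (\<phi> B) < d" using card_mono by (metis le_less_trans)
        then show False using \<phi>[OF B] by simp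
      qed
    qed
    moreover have "\<phi> ` bad A \<subseteq> dsub ?S d" using \<phi> by (auto simp: dsub_def)
    ultimately have "|bad A| \<le>o |dsub ?S d|" using card_of_ordLeq by blast
    then have bz: "|bad A| <o |K|" using dsub_less[OF K Sz] ordLeq_ordLess_trans by blast
    have Iz: "|?P \<union> bad A| <o |K|" using card_of_Un_ordLess_infinite[OF K Pz bz] .
    have fin: "\<forall>B\<in>?P \<union> bad A. finite (A \<inter> B)"
    proof
      fix B assume "B \<in> ?P \<union> bad A"
      then have "B \<in> \<A> \<and> B \<noteq> A" using R_in by (auto simp: bad_def)
      then show "finite (A \<inter> B)" using inter A by blast
    qed
    have "|\<Union>B\<in>?P \<union> bad A. A \<inter> B| <o |K|" using union_small[OF K Iz fin] .
    then obtain y where "y \<in> A" "y \<notin> (\<Union>B\<in>?P \<union> bad A. A \<inter> B)"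
      using not_covered[OF K] cB A by meson
    then have "Px A y" unfolding Px_def by auto
    then show ?thesis by blast
  qed
  have xP: "Px A (x A)" if "A \<in> \<A>" for A
    unfolding x_eq using Px_ex[OF that] by (rule someI_ex)
  have x_in: "x A \<in> A" if "A \<in> \<A>" for A using xP[OF that] by (simp add: Px_def)
  have x_out: "x A \<notin> B" if "A \<in> \<A>" "(B,A) \<in> R" for A B using xP[OF that(1)] that(2) by (simp add: Px_def)
  have x_bad: "x A \<notin> B" if "A \<in> \<A>" "B \<in> bad A" for A B using xP[OF that(1)] that(2) by (simp add: Px_def)
  have x_inj: "inj_on x \<A>"
  proof (rule inj_onI, rule ccontr)
    fix A B assume AB: "A \<in> \<A>" "B \<in> \<A>" "x A = x B" "A \<noteq> B"
    from R_total[OF AB(1,2,4)] show False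
      using x_out x_in AB by metis
  qed
  define E where "E = (\<lambda>B. {A. (A,B)\<in>R \<and> x A \<in> B})"
  have E_bound: "finite (E B) \<and> card (E B) \<le> d" if B: "B \<in> \<A>" for B
  proof (rule ccontr)
    assume nb: "\<not> ?thesis"
    obtain G where G: "G \<subseteq> E B" "finite G" "card G = Suc d"
    proof (cases "finite (E B)")
      case True
      then have "Suc d \<le> card (E B)" using nb by auto
      then show ?thesis using that obtain_subset_with_card_n[of "Suc d" "E B"] True
        by (metis finite_subset)
    next
      case False
      then show ?thesis using that infinite_arbitrarily_large by metis
    qed
    have GA: "G \<subseteq> \<A>" using G(1) R_in by (auto simp: E_def)
    have "G \<noteq> {}" using G by auto
    then obtain m where m: "m \<in> G" "\<forall>a\<in>G. (a,m) \<in> W"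
      using lin_max[OF lin G(2)] GA WO(2) by blast
    have mA: "m \<in> \<A>" using m GA by auto
    have mE: "(m,B) \<in> R" "x m \<in> B" using m G(1) by (auto simp: E_def)
    let ?G' = "G - {m}"
    have G'R: "\<forall>a\<in>?G'. (a,m) \<in> R" using m W_R by auto
    have cG': "card ?G' = d" using G m by simp
    have "card (x ` ?G') = d" using cG' x_inj GA by (metis card_image inj_on_subset Diff_subset order_trans G(1) GA)
    moreover have "x ` ?G' \<subseteq> B \<inter> x ` {B'. (B',m)\<in>R}" using G'R G(1) by (auto simp: E_def)
    moreover have "finite (x ` ?G')" using G by auto
    moreover have "B \<noteq> m" using mE R_in by blast
    ultimately have "B \<in> bad m" using B unfolding bad_def by blast
    then show False using x_bad[OF mA] mE by blast
  qed
  have cnt_E: "cnt A i = card {B\<in>E A. c B = i}" for A i by (simp add: cnt_def E_def conj_assoc)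
  have c_spec: "c A \<le> k \<and> (cnt A (c A) = 0 \<or> (\<exists>i\<le>k. i\<noteq>c A \<and> cnt A i = 1))" if A: "A \<in> \<A>" for A
  proof -
    have "\<exists>i\<le>k. cnt A i < 2"
    proof (rule ccontr)
      assume "\<not> ?thesis"
      then have "\<forall>i\<le>k. 2 \<le> card {B\<in>E A. c B = i}" by (auto simp: cnt_E)
      then have "2*(k+1) \<le> card {B\<in>E A. c B \<le> k}" using two_le_card_sum E_bound[OF A] by blast
      also have "\<dots> \<le> card (E A)" using E_bound[OF A] by (intro card_mono) auto
      also have "\<dots> \<le> d" using E_bound[OF A] by blast
      finally show False using dk by simp
    qed
    then obtain i where i: "i \<le> k" "cnt A i < 2" by blast
    have "\<exists>cc. cc \<le> k \<and> (cnt A cc = 0 \<or> (\<exists>i\<le>k. i\<noteq>cc \<and> cnt A i = 1))"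
    proof (cases "cnt A i = 0")
      case True then show ?thesis using i by blast
    next
      case False
      then have "cnt A i = 1" using i by simp
      then show ?thesis using i k1 by (intro exI[of _ "if i = 0 then 1 else 0"]) auto
    qed
    then show ?thesis unfolding c_eq by (rule someI_ex)
  qed
  define f where "f = (\<lambda>y. if y \<in> x ` \<A> then Some (c (inv_into \<A> x y)) else None)"
  have cls: "B \<inter> {y. f y = Some \<zeta>} = x ` {A\<in>\<A>. x A \<in> B \<and> c A = \<zeta>}" for B \<zeta>
    unfolding f_def using x_inj by (auto simp: inv_into_f_f inj_on_eq_iff)
  have cls_card: "card (B \<inter> {y. f y = Some \<zeta>}) = card {A\<in>\<A>. x A \<in> B \<and> c A = \<zeta>}" for B \<zeta>
    unfolding cls using x_inj by (intro card_image) (auto intro: inj_on_subset)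
  have split: "{A\<in>\<A>. x A \<in> B \<and> c A = \<zeta>} = {A\<in>E B. c A = \<zeta>} \<union> {A. A = B \<and> c B = \<zeta>}"
    if B: "B \<in> \<A>" for B \<zeta>
  proof -
    have "A \<in> \<A> \<and> x A \<in> B \<longleftrightarrow> A \<in> E B \<or> A = B" for A
    proof
      assume a: "A \<in> \<A> \<and> x A \<in> B"
      show "A \<in> E B \<or> A = B"
      proof (cases "A = B")
        case False
        then have "(A,B)\<in>R \<or> (B,A)\<in>R" using R_total a B by blast
        then have "(A,B)\<in>R" using x_out a by blast
        then show ?thesis using a by (simp add: E_def)
      qed simp
    next
      assume "A \<in> E B \<or> A = B"
      then show "A \<in> \<A> \<and> x A \<in> B" proof
        assume "A \<in> E B" then show ?thesis using R_in by (auto simp: E_def)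
      qed (use x_in B in auto)
    qed
    then show ?thesis by auto
  qed
  have "wCF_coloring \<A> (Suc k) f"
    unfolding wCF_coloring_def
  proof (intro conjI ballI)
    show "dom f \<subseteq> \<Union>\<A>" using x_in by (auto simp: f_def dom_def split: if_splits)
    show "ran f \<subseteq> {..<Suc k}"
    proof
      fix v assume "v \<in> ran f"
      then obtain y where "f y = Some v" by (auto simp: ran_def)
      then have "y \<in> x ` \<A>" "v = c (inv_into \<A> x y)" by (auto simp: f_def split: if_splits)
      then have "inv_into \<A> x y \<in> \<A>" "v = c (inv_into \<A> x y)" by (auto intro: inv_into_into)
      then show "v \<in> {..<Suc k}" using c_spec by (metis lessThan_iff le_imp_less_Suc)
    qed
  next
    fix B assume B: "B \<in> \<A>"
    have finE: "finite {A\<in>E B. c A = \<zeta>}" for \<zeta> using E_bound[OF B] by auto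
    have nB: "B \<notin> E B" using R_in by (auto simp: E_def)
    have ck: "c B \<le> k" using c_spec[OF B] by blast
    show "\<exists>\<zeta><Suc k. card (B \<inter> {y. f y = Some \<zeta>}) = 1"
    proof (cases "cnt B (c B) = 0")
      case True
      then have e: "{A\<in>E B. c A = c B} = {}" using finE by (simp add: cnt_E)
      have "card (B \<inter> {y. f y = Some (c B)}) = card ({A\<in>E B. c A = c B} \<union> {A. A = B \<and> c B = c B})"
        using cls_card split[OF B] by presburger
      also have "\<dots> = 1" unfolding e by simp
      finally have 1: "card (B \<inter> {y. f y = Some (c B)}) = 1" .
      show ?thesis using ck 1 by (intro exI[of _ "c B"]) auto
    next
      case False
      have "\<exists>i\<le>k. i\<noteq>c B \<and> cnt B i = 1" using c_spec[OF B] False by argo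
      then obtain i where i: "i \<le> k" "i \<noteq> c B" "cnt B i = 1" by blast
      have "{A\<in>\<A>. x A \<in> B \<and> c A = i} = {A\<in>E B. c A = i}" using split[OF B, of i] i(2) by auto
      then have "card (B \<inter> {y. f y = Some i}) = cnt B i" using cls_card by (simp add: cnt_E)
      then have "card (B \<inter> {y. f y = Some i}) = 1" using i by simp
      then show ?thesis using i by (intro exI[of _ i]) auto
    qed
  qed
  then show ?thesis unfolding wCF_colorable_def by blast
qed



lemma fin_union_small:
  assumes K: "infinite K" and Q: "finite Q" and X: "\<forall>q\<in>Q. |X q| <o |K|"
  shows "|\<Union>q\<in>Q. X q| <o |K|"
  using Q X
proof (induction Q rule: finite_induct)
  case empty then show ?case using fin_less[OF _ K, of "{}"] by simp
next
  case (insert q Q)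
  then show ?case using card_of_Un_ordLess_infinite[OF K, of "X q" "\<Union>(X`Q)"] by simp
qed

lemma lower:
  fixes \<kappa> :: "'k rel" and k :: nat
  assumes CO: "Card_order \<kappa>" and inf: "infinite (Field \<kappa>)" and k1: "1 \<le> k"
  shows "\<exists>\<A> :: ('k\<times>'k) set set. \<Union>\<A> \<subseteq> Field \<kappa> \<times> Field \<kappa> \<and> |\<A>| =o |Field \<kappa>| \<and>
     (\<forall>A\<in>\<A>. |A| =o |Field \<kappa>| ) \<and>
     (\<forall>A\<in>\<A>. \<forall>B\<in>\<A>. A\<noteq>B \<longrightarrow> finite (A\<inter>B) \<and> card (A\<inter>B) < 2*k) \<and> \<not> wCF_colorable \<A> k"
proof -
  define I where "I = Field \<kappa>"
  have WO: "Well_order \<kappa>" using CO card_order_on_well_order_on by blast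
  have lin: "Linear_order \<kappa>" using WO by (simp add: well_order_on_def)
  define R where "R = \<kappa> - Id"
  have wfR: "wf R" using WO by (simp add: R_def well_order_on_def)
  have rfl: "(a,a) \<in> \<kappa>" if "a \<in> I" for a
    using lin that by (auto simp: I_def linear_order_on_def partial_order_on_def preorder_on_def refl_on_def)
  have tr: "(a,c) \<in> \<kappa>" if "(a,b) \<in> \<kappa>" "(b,c) \<in> \<kappa>" for a b c
    using lin that by (auto simp: linear_order_on_def partial_order_on_def preorder_on_def dest: transD)
  have asy: "a = b" if "(a,b) \<in> \<kappa>" "(b,a) \<in> \<kappa>" for a b
    using lin that by (auto simp: linear_order_on_def partial_order_on_def antisym_def)
  have tot: "(a,b) \<in> \<kappa> \<or> (b,a) \<in> \<kappa>" if "a \<in> I" "b \<in> I" for a b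
    using lin that rfl by (cases "a = b") (auto simp: I_def linear_order_on_def total_on_def)
  have inI: "a \<in> I \<and> b \<in> I" if "(a,b) \<in> \<kappa>" for a b using that by (auto simp: I_def dest: FieldI1 FieldI2)
  have KI: "|I| =o \<kappa>" using card_of_Field_ordIso[OF CO] by (simp add: I_def)
  have infI: "infinite I" using inf by (simp add: I_def)
  have underS_small: "|underS \<kappa> b| <o |I|" if "b \<in> I" for b
    using card_of_underS[OF CO] that KI ordLess_ordIso_trans ordIso_symmetric by (metis I_def)
  have under_small: "|{a. (a,b) \<in> \<kappa>}| <o |I|" if "b \<in> I" for b
  proof -
    have "{a. (a,b) \<in> \<kappa>} = underS \<kappa> b \<union> {b}" using that rfl by (auto simp: underS_def)
    then show ?thesis using card_of_Un_ordLess_infinite[OF infI underS_small[OF that] fin_less[OF _ infI, of "{b}"]] by simp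
  qed
  define FS where "FS = {T. T \<subseteq> I \<times> I \<and> finite T}"
  have infII: "infinite (I \<times> I)" using infI by (metis finite_cartesian_product_iff finite.emptyI)
  have "FS = (\<Union>n. dsub (I\<times>I) n)" by (auto simp: FS_def dsub_def)
  then have "|FS| \<le>o |I \<times> I|"
    using dsub_leq[OF infII] infII[unfolded infinite_iff_card_of_nat]
    by (auto intro!: card_of_UNION_ordLeq_infinite[OF infII])
  then have FSz: "|FS| \<le>o |I|" using card_of_Times_same_infinite[OF infI] ordLeq_ordIso_trans by blast
  have "|I \<times> FS| \<le>o |I|"
    using card_of_Times_ordLeq_infinite_Field[of "|I|" I FS] FSz infI
      ordLeq_refl[OF card_of_Card_order[of I]] card_of_Card_order[of I] by (simp add: Field_card_of)
  then have "\<exists>h. inj_on h (I \<times> FS) \<and> h ` (I \<times> FS) \<subseteq> I" using card_of_ordLeq[of "I \<times> FS" I] by simp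
  then obtain h where h: "inj_on h (I \<times> FS)" "h ` (I \<times> FS) \<subseteq> I" by blast
  define e where "e = (\<lambda>\<alpha>. if \<alpha> \<in> h ` (I \<times> FS) then snd (inv_into (I \<times> FS) h \<alpha>) else {})"
  define lt where "lt = (\<lambda>a b. (a,b) \<in> \<kappa> \<and> a \<noteq> b)"
  have e_FS: "e \<alpha> \<in> FS" for \<alpha>
    using h(1) by (auto simp: e_def FS_def inv_into_f_f)
  have enum: "\<exists>\<alpha>\<in>I. e \<alpha> = T \<and> (\<forall>q\<in>Q. lt (snd q) \<alpha>)" if T: "T \<in> FS" and Q: "finite Q" "Q \<subseteq> I \<times> I" for T Q
  proof -
    define Hit where "Hit = (\<lambda>\<beta>. h (\<beta>, T)) ` I"
    have "bij_betw (\<lambda>\<beta>. h (\<beta>, T)) I Hit" unfolding Hit_def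
      by (rule inj_on_imp_bij_betw) (use h(1) T in \<open>auto simp: inj_on_def\<close>)
    then have Hz: "|Hit| =o |I|" using card_of_ordIso ordIso_symmetric by blast
    define Lo where "Lo = (\<Union>q\<in>Q. {a. (a, snd q) \<in> \<kappa>})"
    have Lz: "|Lo| <o |I|" unfolding Lo_def using Q under_small
      by (intro fin_union_small[OF infI Q(1)]) auto
    obtain \<alpha> where a: "\<alpha> \<in> Hit" "\<alpha> \<notin> Lo" using not_covered[OF infI Hz Lz] by blast
    then obtain \<beta> where b: "\<beta> \<in> I" "\<alpha> = h (\<beta>, T)" by (auto simp: Hit_def)
    have aI: "\<alpha> \<in> I" using h(2) b T by auto
    have "e \<alpha> = T" using b T h(1) by (auto simp: e_def)
    moreover have "lt (snd q) \<alpha>" if "q \<in> Q" for q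
    proof -
      have qI: "snd q \<in> I" using that Q by auto
      have "(\<alpha>, snd q) \<notin> \<kappa>" using a that by (auto simp: Lo_def)
      then show ?thesis using tot[OF qI aI] rfl[OF aI] by (auto simp: lt_def)
    qed
    ultimately show ?thesis using aI by blast
  qed
  define F where "F = (\<lambda>\<alpha>. {(\<alpha>,\<beta>) | \<beta>. (\<alpha>,\<beta>) \<in> \<kappa>})"
  define H where "H = (\<lambda>(f::'k \<Rightarrow> ('k\<times>'k) set) \<alpha>.
     if finite (e \<alpha>) \<and> (\<forall>q\<in>e \<alpha>. lt (snd q) \<alpha>) \<and>
        (card (e \<alpha>) < 2*k \<or> (card (e \<alpha>) = 2*k \<and> (\<forall>\<gamma>. (\<gamma>,\<alpha>) \<in> R \<longrightarrow> \<not> e \<alpha> \<subseteq> f \<gamma> \<union> F \<gamma>)))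
     then e \<alpha> else {})"
  define U where "U = wfrec R H"
  have U_eq: "U \<alpha> = (if finite (e \<alpha>) \<and> (\<forall>q\<in>e \<alpha>. lt (snd q) \<alpha>) \<and>
        (card (e \<alpha>) < 2*k \<or> (card (e \<alpha>) = 2*k \<and> (\<forall>\<gamma>. (\<gamma>,\<alpha>) \<in> R \<longrightarrow> \<not> e \<alpha> \<subseteq> U \<gamma> \<union> F \<gamma>)))
     then e \<alpha> else {})" for \<alpha>
  proof -
    have "U \<alpha> = H (cut U R \<alpha>) \<alpha>" by (simp add: U_def wfrec[OF wfR])
    moreover have "(\<forall>\<gamma>. (\<gamma>,\<alpha>) \<in> R \<longrightarrow> \<not> e \<alpha> \<subseteq> cut U R \<alpha> \<gamma> \<union> F \<gamma>) = (\<forall>\<gamma>. (\<gamma>,\<alpha>) \<in> R \<longrightarrow> \<not> e \<alpha> \<subseteq> U \<gamma> \<union> F \<gamma>)"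
      by (simp add: cut_apply)
    ultimately show ?thesis unfolding H_def by simp
  qed
  have R_lt: "(\<gamma>,\<alpha>) \<in> R \<longleftrightarrow> lt \<gamma> \<alpha>" for \<gamma> \<alpha> by (auto simp: R_def lt_def)
  have U_cases: "U \<alpha> = {} \<or> (U \<alpha> = e \<alpha> \<and> finite (e \<alpha>) \<and> (\<forall>q\<in>e \<alpha>. lt (snd q) \<alpha>) \<and>
        (card (e \<alpha>) < 2*k \<or> (card (e \<alpha>) = 2*k \<and> (\<forall>\<gamma>. lt \<gamma> \<alpha> \<longrightarrow> \<not> e \<alpha> \<subseteq> U \<gamma> \<union> F \<gamma>))))" for \<alpha>
    using U_eq[of \<alpha>] unfolding R_lt by (auto split: if_splits)
  have U_fin: "finite (U \<alpha>)" for \<alpha> using U_cases[of \<alpha>] by auto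
  have U_below: "lt (snd q) \<alpha>" if "q \<in> U \<alpha>" for q \<alpha> using U_cases[of \<alpha>] that by auto
  have U_II: "U \<alpha> \<subseteq> I \<times> I" for \<alpha> using U_cases[of \<alpha>] e_FS[of \<alpha>] by (auto simp: FS_def)
  define Bl where "Bl = (\<lambda>\<alpha>. U \<alpha> \<union> F \<alpha>)"
  have inter_eq: "Bl \<alpha> \<inter> Bl \<gamma> = U \<alpha> \<inter> Bl \<gamma>" if lt: "lt \<gamma> \<alpha>" for \<alpha> \<gamma>
  proof -
    have "p \<notin> Bl \<gamma>" if p: "p \<in> F \<alpha>" for p
    proof
      assume pB: "p \<in> Bl \<gamma>"
      obtain \<beta> where pb: "p = (\<alpha>,\<beta>)" "(\<alpha>,\<beta>) \<in> \<kappa>" using p by (auto simp: F_def)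
      show False
      proof (cases "p \<in> F \<gamma>")
        case True then show False using pb lt by (auto simp: F_def lt_def)
      next
        case False
        then have "p \<in> U \<gamma>" using pB by (simp add: Bl_def)
        then have "lt \<beta> \<gamma>" using U_below pb by fastforce
        then show False using lt pb tr asy by (metis lt_def)
      qed
    qed
    then show ?thesis by (auto simp: Bl_def)
  qed
  have inter_small: "finite (Bl \<alpha> \<inter> Bl \<gamma>) \<and> card (Bl \<alpha> \<inter> Bl \<gamma>) < 2*k" if lt: "lt \<gamma> \<alpha>" for \<alpha> \<gamma>
  proof -
    have fin: "finite (U \<alpha> \<inter> Bl \<gamma>)" using U_fin by auto
    have "card (U \<alpha> \<inter> Bl \<gamma>) < 2*k"
    proof (cases "U \<alpha> = {}")
      case True then show ?thesis using k1 by simp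
    next
      case False
      then have U: "U \<alpha> = e \<alpha>" "card (e \<alpha>) < 2*k \<or> (card (e \<alpha>) = 2*k \<and> \<not> e \<alpha> \<subseteq> Bl \<gamma>)"
        using U_cases[of \<alpha>] lt by (auto simp: Bl_def)
      show ?thesis
      proof (cases "card (e \<alpha>) < 2*k")
        case True
        have "card (U \<alpha> \<inter> Bl \<gamma>) \<le> card (U \<alpha>)" using card_mono[OF U_fin[of \<alpha>]] by blast
        then show ?thesis using U True by simp
      next
        case False
        then have "U \<alpha> \<inter> Bl \<gamma> \<subset> U \<alpha>" "card (U \<alpha>) = 2*k" using U by auto
        then show ?thesis using psubset_card_mono[OF U_fin] by metis
      qed
    qed
    then show ?thesis using fin inter_eq[OF lt] by simp
  qed
  have inter_small2: "finite (Bl \<alpha> \<inter> Bl \<gamma>) \<and> card (Bl \<alpha> \<inter> Bl \<gamma>) < 2*k"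
    if "\<alpha> \<in> I" "\<gamma> \<in> I" "\<alpha> \<noteq> \<gamma>" for \<alpha> \<gamma>
  proof -
    have "lt \<gamma> \<alpha> \<or> lt \<alpha> \<gamma>" using tot[OF that(1,2)] that(3) by (auto simp: lt_def)
    then show ?thesis using inter_small[of \<gamma> \<alpha>] inter_small[of \<alpha> \<gamma>] by (metis Int_commute)
  qed
  have Bl_II: "Bl \<alpha> \<subseteq> I \<times> I" for \<alpha> using U_II[of \<alpha>] inI by (auto simp: Bl_def F_def)
  have Bl_card: "|Bl \<alpha>| =o |I|" if aI: "\<alpha> \<in> I" for \<alpha>
  proof -
    define Up where "Up = {\<beta>. (\<alpha>,\<beta>) \<in> \<kappa>}"
    have cov: "I \<subseteq> Up \<union> underS \<kappa> \<alpha>"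
    proof
      fix \<beta> assume bI: "\<beta> \<in> I"
      show "\<beta> \<in> Up \<union> underS \<kappa> \<alpha>"
      proof (cases "(\<alpha>,\<beta>) \<in> \<kappa>")
        case True then show ?thesis by (simp add: Up_def)
      next
        case False
        then have "(\<beta>,\<alpha>) \<in> \<kappa>" "\<beta> \<noteq> \<alpha>" using tot[OF aI bI] rfl[OF aI] by auto
        then show ?thesis by (simp add: underS_def)
      qed
    qed
    have "\<not> |Up| <o |I|"
    proof
      assume u: "|Up| <o |I|"
      have "|Up \<union> underS \<kappa> \<alpha>| <o |I|" by (rule card_of_Un_ordLess_infinite[OF infI u underS_small[OF aI]])
      moreover have "|I| \<le>o |Up \<union> underS \<kappa> \<alpha>|" using cov by (rule card_of_mono1)
      ultimately have "|I| <o |I|" using ordLeq_ordLess_trans by blast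
      then show False by (simp add: ordLess_irreflexive)
    qed
    then have 1: "|I| \<le>o |Up|" using not_ordLess_iff_ordLeq[OF card_of_Well_order card_of_Well_order] by metis
    have "F \<alpha> = (\<lambda>\<beta>. (\<alpha>,\<beta>)) ` Up" by (auto simp: F_def Up_def)
    moreover have "inj_on (\<lambda>\<beta>. (\<alpha>,\<beta>)) Up" by (auto simp: inj_on_def)
    ultimately have "|Up| \<le>o |F \<alpha>|" using card_of_ordLeq[of Up "F \<alpha>"] by auto
    moreover have "|F \<alpha>| \<le>o |Bl \<alpha>|" by (rule card_of_mono1) (auto simp: Bl_def)
    ultimately have 2: "|I| \<le>o |Bl \<alpha>|" using 1 ordLeq_transitive by metis
    have "|Bl \<alpha>| \<le>o |I \<times> I|" using Bl_II by (rule card_of_mono1)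
    then have 3: "|Bl \<alpha>| \<le>o |I|" using card_of_Times_same_infinite[OF infI] by (rule ordLeq_ordIso_trans)
    show ?thesis using 2 3 ordIso_iff_ordLeq by blast
  qed
  have Bl_inf: "infinite (Bl \<alpha>)" if "\<alpha> \<in> I" for \<alpha>
    using Bl_card[OF that] card_of_ordIso_finite infI by blast
  have Bl_inj: "inj_on Bl I"
  proof (rule inj_onI, rule ccontr)
    fix \<alpha> \<gamma> assume a: "\<alpha> \<in> I" "\<gamma> \<in> I" "Bl \<alpha> = Bl \<gamma>" "\<alpha> \<noteq> \<gamma>"
    then show False using inter_small2[OF a(1,2,4)] Bl_inf[OF a(1)] by simp
  qed
  define \<A>0 where "\<A>0 = Bl ` I"
  have A0_card: "|\<A>0| =o |I|"
  proof -
    have "bij_betw Bl I \<A>0" using Bl_inj by (simp add: \<A>0_def inj_on_imp_bij_betw)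
    then show ?thesis using card_of_ordIso ordIso_symmetric by blast
  qed
  have A0_sub: "\<Union>\<A>0 \<subseteq> I \<times> I" using Bl_II by (auto simp: \<A>0_def)
  have noncol: "\<not> wCF_colorable \<A>0 k"
  proof
    assume "wCF_colorable \<A>0 k"
    then obtain f where f: "dom f \<subseteq> \<Union>\<A>0" "ran f \<subseteq> {..<k}"
      "\<forall>A\<in>\<A>0. \<exists>\<zeta><k. card (A \<inter> {x. f x = Some \<zeta>}) = 1"
      unfolding wCF_colorable_def wCF_coloring_def by blast
    define C where "C = (\<lambda>i. {y. f y = Some i})"
    have C_II: "C i \<subseteq> I \<times> I" for i using f(1) A0_sub by (auto simp: C_def)
    have C_disj: "C i \<inter> C j = {}" if "i \<noteq> j" for i j using that by (auto simp: C_def)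
    define Big where "Big = {i. i < k \<and> (\<exists>a b. a \<noteq> b \<and> a \<in> C i \<and> b \<in> C i)}"
    define pr where "pr = (\<lambda>i. SOME p. fst p \<noteq> snd p \<and> fst p \<in> C i \<and> snd p \<in> C i)"
    have pr: "fst (pr i) \<noteq> snd (pr i) \<and> fst (pr i) \<in> C i \<and> snd (pr i) \<in> C i" if iB: "i \<in> Big" for i
    proof -
      obtain a b where "a \<noteq> b" "a \<in> C i" "b \<in> C i" using iB unfolding Big_def by blast
      then have "\<exists>p. fst p \<noteq> snd p \<and> fst p \<in> C i \<and> snd p \<in> C i" by (intro exI[of _ "(a,b)"]) auto
      then show ?thesis unfolding pr_def by (rule someI_ex)
    qed
    define T where "T = (\<Union>i\<in>Big. {fst (pr i), snd (pr i)})"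
    define Sm where "Sm = {i. i < k \<and> i \<notin> Big}"
    define P where "P = (\<Union>i\<in>Sm. C i)"
    have finBig: "finite Big" by (auto simp: Big_def)
    have T_fin: "finite T" using finBig by (auto simp: T_def)
    have TC: "T \<subseteq> (\<Union>i\<in>Big. C i)"
    proof
      fix y assume "y \<in> T"
      then obtain i where "i \<in> Big" "y = fst (pr i) \<or> y = snd (pr i)" by (auto simp: T_def)
      then show "y \<in> (\<Union>i\<in>Big. C i)" using pr[of i] by auto
    qed
    have "(\<Union>i\<in>Big. C i) \<subseteq> I \<times> I" using C_II by (simp add: UN_least)
    then have T_II: "T \<subseteq> I \<times> I" using TC by (rule subset_trans[rotated])
    have cT: "card T = 2 * card Big"
    proof -
      have "card T = (\<Sum>i\<in>Big. card {fst (pr i), snd (pr i)})" unfolding T_def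
      proof (rule card_UN_disjoint[OF finBig])
        show "\<forall>i\<in>Big. finite {fst (pr i), snd (pr i)}" by auto
        show "\<forall>i\<in>Big. \<forall>j\<in>Big. i \<noteq> j \<longrightarrow> {fst (pr i), snd (pr i)} \<inter> {fst (pr j), snd (pr j)} = {}"
        proof (intro ballI impI)
          fix i j assume ij: "i \<in> Big" "j \<in> Big" "i \<noteq> j"
          have "{fst (pr i), snd (pr i)} \<subseteq> C i" "{fst (pr j), snd (pr j)} \<subseteq> C j" using pr ij by auto
          then show "{fst (pr i), snd (pr i)} \<inter> {fst (pr j), snd (pr j)} = {}" using C_disj[OF ij(3)] by blast
        qed
      qed
      also have "\<dots> = (\<Sum>i\<in>Big. 2)" using pr by (intro sum.cong) auto
      finally show ?thesis by simp
    qed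
    have Big_le: "card Big \<le> k" using card_mono[of "{..<k}" Big] by (auto simp: Big_def)
    have small: "C i \<subseteq> {a}" if "i \<in> Sm" "a \<in> C i" for i a
    proof
      fix b assume "b \<in> C i"
      then have "\<not> (a \<noteq> b)" using that unfolding Sm_def Big_def by blast
      then show "b \<in> {a}" by simp
    qed
    have P_fin: "finite P" unfolding P_def Sm_def
    proof (rule finite_UN_I)
      fix i assume "i \<in> {i. i < k \<and> i \<notin> Big}"
      then have iS: "i \<in> Sm" by (simp add: Sm_def)
      show "finite (C i)"
      proof (cases "C i = {}")
        case False
        then obtain a where "a \<in> C i" by blast
        then show ?thesis using small[OF iS] finite_subset by blast
      qed simp
    qed auto
    have P_II: "P \<subseteq> I \<times> I" using C_II by (auto simp: P_def)
    have TP: "T \<inter> P = {}"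
    proof (rule ccontr)
      assume "T \<inter> P \<noteq> {}"
      then obtain y where y: "y \<in> T" "y \<in> P" by blast
      then obtain i where i: "i \<in> Big" "y \<in> C i" using TC by blast
      obtain j where j: "j \<in> Sm" "y \<in> C j" using y(2) by (auto simp: P_def)
      have "i \<noteq> j" using i j by (auto simp: Sm_def)
      then show False using C_disj[of i j] i j by blast
    qed
    have TFS: "T \<in> FS" using T_fin T_II by (simp add: FS_def)
    obtain \<alpha> where \<alpha>: "\<alpha> \<in> I" "e \<alpha> = T" "\<forall>q\<in>T \<union> P. lt (snd q) \<alpha>"
    proof -
      have "finite (T \<union> P)" "T \<union> P \<subseteq> I \<times> I" using T_fin P_fin T_II P_II by auto
      from enum[OF TFS this] show ?thesis using that by blast
    qed
    have "\<exists>\<gamma>\<in>I. T \<subseteq> Bl \<gamma> \<and> Bl \<gamma> \<inter> P = {}"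
    proof (cases "card T < 2*k")
      case True
      then have U: "U \<alpha> = T" using U_eq[of \<alpha>] \<alpha> T_fin by simp
      have "F \<alpha> \<inter> P = {}"
      proof (rule ccontr)
        assume "F \<alpha> \<inter> P \<noteq> {}"
        then obtain \<beta> where "(\<alpha>,\<beta>) \<in> \<kappa>" "(\<alpha>,\<beta>) \<in> P" by (auto simp: F_def)
        then show False using \<alpha>(3) asy[of \<alpha> \<beta>] by (force simp: lt_def)
      qed
      then show ?thesis using \<alpha>(1) U TP by (intro bexI[of _ \<alpha>]) (auto simp: Bl_def)
    next
      case False
      then have "card Big = k" using cT Big_le by simp
      then have "Big = {..<k}" using card_subset_eq[of "{..<k}" Big] by (auto simp: Big_def)
      then have P0: "P = {}" by (auto simp: P_def Sm_def)
      have c2: "card T = 2*k" using cT \<open>card Big = k\<close> by simp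
      show ?thesis
      proof (cases "\<forall>\<gamma>. (\<gamma>,\<alpha>) \<in> R \<longrightarrow> \<not> T \<subseteq> U \<gamma> \<union> F \<gamma>")
        case True
        then have "U \<alpha> = T" using U_eq[of \<alpha>] \<alpha> T_fin c2 by simp
        then show ?thesis using \<alpha>(1) P0 by (intro bexI[of _ \<alpha>]) (auto simp: Bl_def)
      next
        case False
        then obtain \<gamma> where "(\<gamma>,\<alpha>) \<in> R" "T \<subseteq> Bl \<gamma>" by (auto simp: Bl_def)
        moreover have "\<gamma> \<in> I" using \<open>(\<gamma>,\<alpha>) \<in> R\<close> inI by (auto simp: R_def)
        ultimately show ?thesis using P0 by blast
      qed
    qed
    then obtain \<gamma> where \<gamma>: "\<gamma> \<in> I" "T \<subseteq> Bl \<gamma>" "Bl \<gamma> \<inter> P = {}" by blast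
    then obtain \<zeta> where z: "\<zeta> < k" "card (Bl \<gamma> \<inter> C \<zeta>) = 1" using f(3) by (auto simp: \<A>0_def C_def)
    show False
    proof (cases "\<zeta> \<in> Big")
      case True
      then have sub: "{fst (pr \<zeta>), snd (pr \<zeta>)} \<subseteq> Bl \<gamma> \<inter> C \<zeta>" using pr \<gamma>(2) by (auto simp: T_def)
      have "finite (Bl \<gamma> \<inter> C \<zeta>)" using z(2) by (metis card.infinite zero_neq_one)
      then have "card {fst (pr \<zeta>), snd (pr \<zeta>)} \<le> 1" using card_mono[OF _ sub] z(2) by simp
      then show False using pr[OF True] by simp
    next
      case False
      then have "C \<zeta> \<subseteq> P" using z(1) by (auto simp: P_def Sm_def)
      then have "Bl \<gamma> \<inter> C \<zeta> = {}" using \<gamma>(3) by blast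
      then show False using z(2) by simp
    qed
  qed
  show ?thesis
  proof (intro exI[of _ \<A>0] conjI)
    show "\<Union>\<A>0 \<subseteq> Field \<kappa> \<times> Field \<kappa>" using A0_sub by (simp add: I_def)
    show "|\<A>0| =o |Field \<kappa>|" using A0_card by (simp add: I_def)
    show "\<forall>A\<in>\<A>0. |A| =o |Field \<kappa>|" using Bl_card by (auto simp: \<A>0_def I_def)
    show "\<forall>A\<in>\<A>0. \<forall>B\<in>\<A>0. A \<noteq> B \<longrightarrow> finite (A \<inter> B) \<and> card (A \<inter> B) < 2 * k"
      using inter_small2 by (auto simp: \<A>0_def)
    show "\<not> wCF_colorable \<A>0 k" by (rule noncol)
  qed
qed



lemma colorable_mono: "wCF_colorable \<A> n \<Longrightarrow> n \<le> m \<Longrightarrow> wCF_colorable \<A> m"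
  unfolding wCF_colorable_def wCF_coloring_def
  by (meson dual_order.trans lessThan_subset_iff order_less_le_trans)

lemma colorable_transfer:
  assumes inj: "inj_on h (\<Union>\<A>0)" and col: "wCF_colorable ((`) h ` \<A>0) n"
  shows "wCF_colorable \<A>0 n"
proof -
  obtain f where f: "dom f \<subseteq> \<Union>((`) h ` \<A>0)" "ran f \<subseteq> {..<n}"
    "\<forall>A\<in>(`) h ` \<A>0. \<exists>\<zeta><n. card (A \<inter> {x. f x = Some \<zeta>}) = 1"
    using col unfolding wCF_colorable_def wCF_coloring_def by blast
  define g where "g = (\<lambda>y. if y \<in> \<Union>\<A>0 then f (h y) else None)"
  have "wCF_coloring \<A>0 n g"
    unfolding wCF_coloring_def
  proof (intro conjI ballI)
    show "dom g \<subseteq> \<Union>\<A>0" by (auto simp: g_def dom_def split: if_splits)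
    have "ran g \<subseteq> ran f" by (auto simp: g_def ran_def split: if_splits)
    then show "ran g \<subseteq> {..<n}" using f(2) by blast
  next
    fix A assume A: "A \<in> \<A>0"
    then obtain \<zeta> where z: "\<zeta> < n" "card (h ` A \<inter> {x. f x = Some \<zeta>}) = 1" using f(3) by blast
    have eq: "h ` (A \<inter> {y. g y = Some \<zeta>}) = h ` A \<inter> {x. f x = Some \<zeta>}"
      using A by (auto simp: g_def)
    have "inj_on h (A \<inter> {y. g y = Some \<zeta>})" using inj A by (auto intro: inj_on_subset)
    then have "card (A \<inter> {y. g y = Some \<zeta>}) = 1" using card_image z(2) eq by metis
    then show "\<exists>\<zeta><n. card (A \<inter> {y. g y = Some \<zeta>}) = 1" using z(1) by blast
  qed
  then show ?thesis unfolding wCF_colorable_def by blast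
qed

theorem theorem6p2:
  fixes \<kappa> :: "'k rel" and d :: nat
  assumes "Card_order \<kappa>" and "infinite (Field \<kappa>)"
    and "|Field \<kappa>| \<le>o |UNIV :: 'a set|"
    and "d \<ge> 2"
  shows "wchi_CF_sys TYPE('a) \<kappa> \<kappa> d = enat (d div 2 + 1)"
proof -
  note CO = assms(1) and inf = assms(2) and emb = assms(3) and d2 = assms(4)
  define k where "k = d div 2"
  have k1: "1 \<le> k" and dk: "d \<le> 2*k+1" "2*k \<le> d" using d2 by (auto simp: k_def)
  have KI: "|Field \<kappa>| =o \<kappa>" using card_of_Field_ordIso[OF CO] .
  have to_I: "|X| =o |Field \<kappa>|" if "|X| =o \<kappa>" for X :: "'b set"
    using that KI ordIso_symmetric ordIso_transitive by blast
  have from_I: "|X| =o \<kappa>" if "|X| =o |Field \<kappa>|" for X :: "'b set"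
    using that KI ordIso_transitive by blast
  have up: "wCF_colorable \<A> (Suc k)" if "lkm_system \<A> \<kappa> \<kappa> d" for \<A> :: "'a set set"
    using that unfolding lkm_system_def
    by (intro upper[of "Field \<kappa>" \<A> d k]) (use inf to_I dk k1 in auto)
  have le: "wchi_CF \<A> \<le> enat (Suc k)" if "lkm_system \<A> \<kappa> \<kappa> d" for \<A> :: "'a set set"
  proof -
    have "\<exists>n. wCF_colorable \<A> n" using up[OF that] by blast
    then show ?thesis unfolding wchi_CF_def using up[OF that] by (simp add: Least_le)
  qed
  obtain \<A>0 :: "('k\<times>'k) set set" where A0: "\<Union>\<A>0 \<subseteq> Field \<kappa> \<times> Field \<kappa>" "|\<A>0| =o |Field \<kappa>|"
     "\<forall>A\<in>\<A>0. |A| =o |Field \<kappa>|"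
     "\<forall>A\<in>\<A>0. \<forall>B\<in>\<A>0. A\<noteq>B \<longrightarrow> finite (A\<inter>B) \<and> card (A\<inter>B) < 2*k" "\<not> wCF_colorable \<A>0 k"
    using lower[OF CO inf k1] by blast
  have infI: "infinite (Field \<kappa>)" by (rule inf)
  have "|Field \<kappa> \<times> Field \<kappa>| \<le>o |UNIV :: 'a set|"
    using card_of_Times_same_infinite[OF infI] emb ordIso_ordLeq_trans by blast
  then have "\<exists>h. inj_on h (Field \<kappa> \<times> Field \<kappa>) \<and> h ` (Field \<kappa> \<times> Field \<kappa>) \<subseteq> (UNIV :: 'a set)"
    using card_of_ordLeq[of "Field \<kappa> \<times> Field \<kappa>" "UNIV :: 'a set"] by simp
  then obtain h :: "'k\<times>'k \<Rightarrow> 'a" where h: "inj_on h (Field \<kappa> \<times> Field \<kappa>)" by blast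
  have hU: "inj_on h (\<Union>\<A>0)" using h A0(1) by (rule inj_on_subset)
  define \<A> where "\<A> = (`) h ` \<A>0"
  have himg: "inj_on ((`) h) \<A>0"
  proof (rule inj_onI)
    fix A B assume "A \<in> \<A>0" "B \<in> \<A>0" "h ` A = h ` B"
    then show "A = B" using hU by (metis Sup_upper inj_on_image_eq_iff)
  qed
  have sys: "lkm_system \<A> \<kappa> \<kappa> d"
    unfolding lkm_system_def
  proof (intro conjI ballI impI)
    have "bij_betw ((`) h) \<A>0 \<A>" using himg by (simp add: \<A>_def inj_on_imp_bij_betw)
    then have "|\<A>0| =o |\<A>|" using card_of_ordIso by blast
    then show "|\<A>| =o \<kappa>" using A0(2) from_I ordIso_symmetric ordIso_transitive by blast
  next
    fix A assume "A \<in> \<A>"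
    then obtain A' where A': "A' \<in> \<A>0" "A = h ` A'" by (auto simp: \<A>_def)
    have "inj_on h A'" using hU A' by (auto intro: inj_on_subset)
    then have "bij_betw h A' A" using A' by (simp add: inj_on_imp_bij_betw)
    then have "|A'| =o |A|" using card_of_ordIso by blast
    then show "|A| =o \<kappa>" using A0(3) A' from_I ordIso_symmetric ordIso_transitive by blast
  next
    fix A B assume AB: "A \<in> \<A>" "B \<in> \<A>" "A \<noteq> B"
    then obtain A' B' where A': "A' \<in> \<A>0" "A = h ` A'" and B': "B' \<in> \<A>0" "B = h ` B'" by (auto simp: \<A>_def)
    have ne: "A' \<noteq> B'" using AB A' B' by auto
    have eq: "A \<inter> B = h ` (A' \<inter> B')" using A' B' inj_on_image_Int[OF hU, of A' B'] by auto
    have "finite (A' \<inter> B')" "card (A' \<inter> B') < 2*k" using A0(4) A'(1) B'(1) ne by auto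
    then show "finite (A \<inter> B)" "card (A \<inter> B) < d" using eq dk card_image_le[of "A' \<inter> B'" h] by auto
  qed
  have nc: "\<not> wCF_colorable \<A> m" if "m \<le> k" for m
    using colorable_transfer[OF hU] colorable_mono A0(5) that unfolding \<A>_def by blast
  have eqA: "wchi_CF \<A> = enat (Suc k)"
  proof -
    have "(LEAST n. wCF_colorable \<A> n) = Suc k"
    proof (rule Least_equality)
      show "wCF_colorable \<A> (Suc k)" by (rule up[OF sys])
      show "Suc k \<le> y" if "wCF_colorable \<A> y" for y
      proof (rule ccontr)
        assume "\<not> Suc k \<le> y"
        then have "y \<le> k" by simp
        then show False using nc that by blast
      qed
    qed
    then show ?thesis unfolding wchi_CF_def using up[OF sys] by auto
  qed
  have "wchi_CF_sys TYPE('a) \<kappa> \<kappa> d = enat (Suc k)"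
    unfolding wchi_CF_sys_def
  proof (rule antisym)
    show "(SUP \<A> \<in> {\<A> :: 'a set set. lkm_system \<A> \<kappa> \<kappa> d}. wchi_CF \<A>) \<le> enat (Suc k)"
      using le by (intro SUP_least) auto
    show "enat (Suc k) \<le> (SUP \<A> \<in> {\<A> :: 'a set set. lkm_system \<A> \<kappa> \<kappa> d}. wchi_CF \<A>)"
      using sys eqA by (metis SUP_upper mem_Collect_eq)
  qed
  then show ?thesis by (simp add: k_def)
qed

end
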